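(* Let $[\cdot]_{\mathbb{C}}:\mathbb{H}^d\to\mathbb{C}^{2d}$, $z+wj\mapsto\begin{pmatrix}z\\ \bar w\end{pmatrix}$, and let $v_1,\dots,v_n\in\mathbb{H}^d$. (1) If $([v_1]_{\mathbb{C}},\dots,[v_n]_{\mathbb{C}})$ is a tight frame for $\mathbb{C}^{2d}$, then $(v_1,\dots,v_n)$ is a tight frame for $\mathbb{H}^d$. (2) If $(v_1,\dots,v_n)$ is a tight frame for $\mathbb{H}^d$, then $([v_j]_{\mathbb{C}})_{j=1}^n$ is a tight frame for $\mathbb{C}^{2d}$ if and only if $$\sum_j\sum_k|\operatorname{Co}_1(\langle v_j,v_k\rangle)|^2=\sum_j\sum_k|\operatorname{Co}_2(\langle v_j,v_k\rangle)|^2.$$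
   Context: Every quaternion (and entrywise every quaternionic vector) is written uniquely as $z+wj$ with $z,w$ complex. For $q=z+wj\in\mathbb{H}$, $\operatorname{Co}_1(q)=z$ and $\operatorname{Co}_2(q)=\bar w$, so $|q|^2=|\operatorname{Co}_1(q)|^2+|\operatorname{Co}_2(q)|^2$. $\mathbb{H}^d$ is a right vector space; inner products are Euclidean, $\langle v,w\rangle=\sum_j\overline{w_j}v_j$. A sequence $(u_j)$ is a tight frame for $\mathbb{F}^D$ if there is $A>0$ with $A\|u\|^2=\sum_j|\langle u,u_j\rangle|^2$ for all $u\in\mathbb{F}^D$. *)

theory Defs
  imports Complex_Main
begin

text \<open>Quaternions q = z + w j, stored as the pair (z, w) of complex numbers.\<close>
datatype quat = Quat (qz: complex) (qw: complex)

instantiation quat :: ab_group_add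
begin
definition "0 = Quat 0 0"
definition "p + q = Quat (qz p + qz q) (qw p + qw q)"
definition "- q = Quat (- qz q) (- qw q)"
definition "p - q = Quat (qz p - qz q) (qw p - qw q)"
instance
  by standard (auto simp: zero_quat_def plus_quat_def uminus_quat_def minus_quat_def
                 intro: quat.expand)
end

text \<open>Quaternion product, using j z = cnj z j and j j = -1:
  (z1 + w1 j)(z2 + w2 j) = (z1 z2 - w1 cnj w2) + (z1 w2 + w1 cnj z2) j.\<close>
definition qmult :: "quat \<Rightarrow> quat \<Rightarrow> quat" where
  "qmult p q = Quat (qz p * qz q - qw p * cnj (qw q)) (qz p * qw q + qw p * cnj (qz q))"

definition qcnj :: "quat \<Rightarrow> quat" where
  "qcnj q = Quat (cnj (qz q)) (- qw q)"

definition Co1 :: "quat \<Rightarrow> complex" where "Co1 q = qz q"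
definition Co2 :: "quat \<Rightarrow> complex" where "Co2 q = cnj (qw q)"

definition qnorm2 :: "quat \<Rightarrow> real" where
  "qnorm2 q = (cmod (Co1 q))\<^sup>2 + (cmod (Co2 q))\<^sup>2"

definition hinner :: "('d::finite \<Rightarrow> quat) \<Rightarrow> ('d \<Rightarrow> quat) \<Rightarrow> quat" where
  "hinner u v = (\<Sum>i\<in>UNIV. qmult (qcnj (v i)) (u i))"

definition hnorm2 :: "('d::finite \<Rightarrow> quat) \<Rightarrow> real" where
  "hnorm2 u = (\<Sum>i\<in>UNIV. qnorm2 (u i))"

definition cinner :: "('e::finite \<Rightarrow> complex) \<Rightarrow> ('e \<Rightarrow> complex) \<Rightarrow> complex" where
  "cinner u v = (\<Sum>i\<in>UNIV. cnj (v i) * u i)"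

definition cnorm2 :: "('e::finite \<Rightarrow> complex) \<Rightarrow> real" where
  "cnorm2 u = (\<Sum>i\<in>UNIV. (cmod (u i))\<^sup>2)"

definition htight :: "(nat \<Rightarrow> ('d::finite \<Rightarrow> quat)) \<Rightarrow> nat \<Rightarrow> bool" where
  "htight u n \<longleftrightarrow> (\<exists>A>0. \<forall>x. A * hnorm2 x = (\<Sum>j<n. qnorm2 (hinner x (u j))))"

definition ctight :: "(nat \<Rightarrow> ('e::finite \<Rightarrow> complex)) \<Rightarrow> nat \<Rightarrow> bool" where
  "ctight u n \<longleftrightarrow> (\<exists>A>0. \<forall>x. A * cnorm2 x = (\<Sum>j<n. (cmod (cinner x (u j)))\<^sup>2))"

definition toC :: "('d::finite \<Rightarrow> quat) \<Rightarrow> ('d + 'd \<Rightarrow> complex)" where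
  "toC v = (\<lambda>k. case k of Inl i \<Rightarrow> qz (v i) | Inr i \<Rightarrow> cnj (qw (v i)))"

end

theory Submission imports Defs begin

lemma sum_Plus_UNIV: "(\<Sum>a\<in>(UNIV::('a::finite+'b::finite) set). g a) = (\<Sum>i\<in>UNIV. g (Inl i)) + (\<Sum>i\<in>UNIV. g (Inr i))"
  using sum.Plus[of "UNIV::'a set" "UNIV::'b set" g] by (simp add: o_def)

lemma qz_sum: "finite A \<Longrightarrow> qz (sum f A) = (\<Sum>x\<in>A. qz (f x))"
  by (induction A rule: finite_induct) (auto simp: zero_quat_def plus_quat_def)
lemma qw_sum: "finite A \<Longrightarrow> qw (sum f A) = (\<Sum>x\<in>A. qw (f x))"
  by (induction A rule: finite_induct) (auto simp: zero_quat_def plus_quat_def)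

definition qj :: "('d::finite \<Rightarrow> quat) \<Rightarrow> ('d \<Rightarrow> quat)" where
  "qj x = (\<lambda>i. Quat (- qw (x i)) (qz (x i)))"

lemma Co1_hinner: "Co1 (hinner x v) = cinner (toC x) (toC v)"
  by (simp add: Co1_def hinner_def cinner_def qz_sum sum_Plus_UNIV toC_def qmult_def qcnj_def
      sum.distrib[symmetric] mult.commute)

lemma Co2_hinner: "cinner (toC (qj x)) (toC v) = - cnj (Co2 (hinner x v))"
  by (simp add: Co2_def hinner_def cinner_def qw_sum sum_Plus_UNIV toC_def qmult_def qcnj_def qj_def
      sum.distrib[symmetric] sum_negf[symmetric] algebra_simps)

lemma qnorm2_hinner: "qnorm2 (hinner x v) = (cmod (cinner (toC x) (toC v)))\<^sup>2 + (cmod (cinner (toC (qj x)) (toC v)))\<^sup>2"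
  by (simp add: qnorm2_def Co1_hinner Co2_hinner)

lemma cnorm2_toC: "cnorm2 (toC x) = hnorm2 x"
  by (simp add: cnorm2_def hnorm2_def qnorm2_def sum_Plus_UNIV toC_def Co1_def Co2_def sum.distrib)

lemma cnorm2_toC_qj: "cnorm2 (toC (qj x)) = hnorm2 x"
  by (simp add: cnorm2_def hnorm2_def qnorm2_def sum_Plus_UNIV toC_def Co1_def Co2_def sum.distrib qj_def add.commute)
definition Sm :: "(nat \<Rightarrow> ('e::finite \<Rightarrow> complex)) \<Rightarrow> nat \<Rightarrow> 'e \<Rightarrow> 'e \<Rightarrow> complex" where
  "Sm u n a b = (\<Sum>j<n. u j a * cnj (u j b))"

lemma Q_expand: "complex_of_real (\<Sum>j<n. (cmod (cinner y (u j)))\<^sup>2)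
   = (\<Sum>a\<in>UNIV. \<Sum>b\<in>UNIV. Sm u n b a * y a * cnj (y b))"
proof -
  have "complex_of_real (\<Sum>j<n. (cmod (cinner y (u j)))\<^sup>2)
     = (\<Sum>j<n. cinner y (u j) * cnj (cinner y (u j)))"
    by (simp only: of_real_sum complex_norm_square)
  also have "\<dots> = (\<Sum>j<n. \<Sum>a\<in>UNIV. \<Sum>b\<in>UNIV. (cnj (u j a) * y a) * (u j b * cnj (y b)))"
    by (simp add: cinner_def sum_product)
  also have "\<dots> = (\<Sum>a\<in>UNIV. \<Sum>b\<in>UNIV. \<Sum>j<n. (cnj (u j a) * y a) * (u j b * cnj (y b)))"
    by (simp add: sum.swap[where A="{..<n}" and B=UNIV] )
  also have "\<dots> = (\<Sum>a\<in>UNIV. \<Sum>b\<in>UNIV. Sm u n b a * y a * cnj (y b))"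
    by (simp add: Sm_def sum_distrib_left mult_ac)
  finally show ?thesis .
qed

lemma frob: "complex_of_real (\<Sum>j<n. \<Sum>k<n. (cmod (cinner (u j) (u k)))\<^sup>2)
   = (\<Sum>a\<in>UNIV. \<Sum>b\<in>UNIV. Sm u n a b * cnj (Sm u n a b))"
proof -
  have "complex_of_real (\<Sum>j<n. \<Sum>k<n. (cmod (cinner (u j) (u k)))\<^sup>2)
     = (\<Sum>j<n. \<Sum>k<n. cinner (u j) (u k) * cnj (cinner (u j) (u k)))"
    by (simp only: of_real_sum complex_norm_square)
  also have "\<dots> = (\<Sum>j<n. \<Sum>k<n. \<Sum>a\<in>UNIV. \<Sum>b\<in>UNIV. (cnj (u k a) * u j a) * (u k b * cnj (u j b)))"
    by (simp add: cinner_def sum_product)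
  also have "\<dots> = (\<Sum>j<n. \<Sum>a\<in>UNIV. \<Sum>b\<in>UNIV. \<Sum>k<n. (cnj (u k a) * u j a) * (u k b * cnj (u j b)))"
    by (simp add: sum.swap[where A="{..<n}" and B=UNIV])
  also have "\<dots> = (\<Sum>a\<in>UNIV. \<Sum>b\<in>UNIV. \<Sum>j<n. \<Sum>k<n. (cnj (u k a) * u j a) * (u k b * cnj (u j b)))"
    by (simp add: sum.swap[where A="{..<n}" and B=UNIV])
  also have "\<dots> = (\<Sum>a\<in>UNIV. \<Sum>b\<in>UNIV. Sm u n a b * cnj (Sm u n a b))"
    by (simp add: Sm_def sum_product mult_ac)
  finally show ?thesis .
qed

lemma trace_Sm: "(\<Sum>a\<in>UNIV. Sm u n a a) = complex_of_real (\<Sum>j<n. cnorm2 (u j))"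
proof -
  have "(\<Sum>a\<in>UNIV. Sm u n a a) = (\<Sum>j<n. \<Sum>a\<in>UNIV. u j a * cnj (u j a))"
    unfolding Sm_def by (rule sum.swap)
  also have "\<dots> = complex_of_real (\<Sum>j<n. cnorm2 (u j))"
    by (simp only: cnorm2_def of_real_sum complex_norm_square)
  finally show ?thesis .
qed

lemma Sm_real_diag: "cnj (Sm u n a a) = Sm u n a a"
  by (simp add: Sm_def mult.commute)


lemma hnorm2_qj: "hnorm2 (qj x) = hnorm2 x"
  using cnorm2_toC_qj[of x] cnorm2_toC[of "qj x"] by simp

lemma card_UNIV_Plus: "card (UNIV::('d::finite + 'd) set) = 2 * card (UNIV::'d set)"
  using card_Plus[of "UNIV::'d set" "UNIV::'d set"] by simp

lemma unit_toC: "toC (\<lambda>k. if k = i then Quat 1 0 else 0) = (\<lambda>a. if a = Inl i then 1 else 0)"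
  by (auto simp: toC_def zero_quat_def split: sum.split)

lemma unit_toC_qj: "toC (qj (\<lambda>k. if k = i then Quat 1 0 else 0)) = (\<lambda>a. if a = Inr i then 1 else 0)"
  by (auto simp: toC_def qj_def zero_quat_def split: sum.split)

lemma unit_hnorm2: "hnorm2 (\<lambda>k. if k = (i::'d::finite) then Quat 1 0 else 0) = 1"
proof -
  have "hnorm2 (\<lambda>k. if k = (i::'d::finite) then Quat 1 0 else 0) = (\<Sum>k\<in>UNIV. if k = i then 1 else 0)"
    unfolding hnorm2_def by (rule sum.cong) (auto simp: qnorm2_def Co1_def Co2_def zero_quat_def)
  then show ?thesis by simp
qed

lemma cinner_delta: "cinner (\<lambda>a. if a = b then 1 else 0) w = cnj (w b)"
  by (simp add: cinner_def if_distrib cong: if_cong)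

lemma Q_delta: "complex_of_real (\<Sum>j<n. (cmod (cinner (\<lambda>a. if a = b then 1 else 0) (u j)))\<^sup>2) = Sm u n b b"
  by (simp only: cinner_delta of_real_sum complex_norm_square Sm_def complex_cnj_cnj mult.commute)

theorem theorem10:
  fixes v :: "nat \<Rightarrow> ('d::finite \<Rightarrow> quat)" and n :: nat
  shows "(ctight (\<lambda>j. toC (v j)) n \<longrightarrow> htight v n)
       \<and> (htight v n \<longrightarrow>
            (ctight (\<lambda>j. toC (v j)) n \<longleftrightarrow>
              (\<Sum>j<n. \<Sum>k<n. (cmod (Co1 (hinner (v j) (v k))))\<^sup>2)
              = (\<Sum>j<n. \<Sum>k<n. (cmod (Co2 (hinner (v j) (v k))))\<^sup>2)))"
proof -
  define u where "u = (\<lambda>j. toC (v j))"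
  have key: "(\<Sum>j<n. qnorm2 (hinner x (v j))) = (\<Sum>j<n. (cmod (cinner (toC x) (u j)))\<^sup>2)
      + (\<Sum>j<n. (cmod (cinner (toC (qj x)) (u j)))\<^sup>2)" for x
    by (simp add: qnorm2_hinner sum.distrib u_def)
  have P1: "htight v n" if "ctight u n"
  proof -
    from that obtain A where A: "A > 0" "\<And>y. A * cnorm2 y = (\<Sum>j<n. (cmod (cinner y (u j)))\<^sup>2)"
      unfolding ctight_def by blast
    have "(2*A) * hnorm2 x = (\<Sum>j<n. qnorm2 (hinner x (v j)))" for x
      using A(2)[of "toC x"] A(2)[of "toC (qj x)"] by (simp add: key cnorm2_toC hnorm2_qj)
    then show ?thesis unfolding htight_def using A(1) by (intro exI[of _ "2*A"]) auto
  qed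
  have P2: "ctight u n \<longleftrightarrow> (\<Sum>j<n. \<Sum>k<n. (cmod (Co1 (hinner (v j) (v k))))\<^sup>2)
              = (\<Sum>j<n. \<Sum>k<n. (cmod (Co2 (hinner (v j) (v k))))\<^sup>2)" if "htight v n"
  proof -
    from that obtain B where B: "B > 0" "\<And>x. B * hnorm2 x = (\<Sum>j<n. qnorm2 (hinner x (v j)))"
      unfolding htight_def by blast
    define C1 where "C1 = (\<Sum>j<n. \<Sum>k<n. (cmod (Co1 (hinner (v j) (v k))))\<^sup>2)"
    define C2 where "C2 = (\<Sum>j<n. \<Sum>k<n. (cmod (Co2 (hinner (v j) (v k))))\<^sup>2)"
    define T where "T = (\<Sum>j<n. hnorm2 (v j))"
    have C1': "C1 = (\<Sum>j<n. \<Sum>k<n. (cmod (cinner (u j) (u k)))\<^sup>2)"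
      by (simp add: C1_def Co1_hinner u_def)
    have C2': "C2 = (\<Sum>j<n. \<Sum>k<n. (cmod (cinner (toC (qj (v j))) (u k)))\<^sup>2)"
      by (simp add: C2_def Co2_hinner u_def)
    have T': "T = (\<Sum>j<n. cnorm2 (u j))" by (simp add: T_def u_def cnorm2_toC)
    have sumB: "C1 + C2 = B * T"
      by (simp add: C1_def C2_def T_def sum_distrib_left B(2) qnorm2_def sum.distrib Co1_def Co2_def)
    have "ctight u n \<longleftrightarrow> C1 = C2"
    proof
      assume "ctight u n"
      then obtain A where A: "A > 0" "\<And>y. A * cnorm2 y = (\<Sum>j<n. (cmod (cinner y (u j)))\<^sup>2)"
        unfolding ctight_def by blast
      have "C1 = A * T" unfolding C1' T' sum_distrib_left A(2) ..
      moreover have "C2 = A * T" unfolding C2' T_def sum_distrib_left A(2)[symmetric]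
        by (simp add: cnorm2_toC_qj)
      ultimately show "C1 = C2" by simp
    next
      assume eq: "C1 = C2"
      have BT: "2*C1 = B*T" using sumB eq by simp
      have diag: "Sm u n (Inl i) (Inl i) + Sm u n (Inr i) (Inr i) = complex_of_real B" for i
      proof -
        let ?x = "(\<lambda>k. if k = i then Quat 1 0 else 0) :: 'd \<Rightarrow> quat"
        have "B = (\<Sum>j<n. (cmod (cinner (\<lambda>a. if a = Inl i then 1 else 0) (u j)))\<^sup>2)
                + (\<Sum>j<n. (cmod (cinner (\<lambda>a. if a = Inr i then 1 else 0) (u j)))\<^sup>2)"
          using B(2)[of ?x] by (simp add: key unit_toC unit_toC_qj unit_hnorm2)
        then have "complex_of_real B = complex_of_real (\<Sum>j<n. (cmod (cinner (\<lambda>a. if a = Inl i then 1 else 0) (u j)))\<^sup>2)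
                + complex_of_real (\<Sum>j<n. (cmod (cinner (\<lambda>a. if a = Inr i then 1 else 0) (u j)))\<^sup>2)"
          by (simp only: of_real_add[symmetric])
        then show ?thesis by (simp only: Q_delta)
      qed
      have "complex_of_real T = (\<Sum>a\<in>UNIV. Sm u n a a)" by (simp add: trace_Sm T')
      also have "\<dots> = (\<Sum>i\<in>(UNIV::'d set). complex_of_real B)"
        by (simp add: sum_Plus_UNIV sum.distrib[symmetric] diag)
      also have "\<dots> = complex_of_real (real (card (UNIV::'d set)) * B)" by simp
      finally have trT: "T = real (card (UNIV::'d set)) * B" by (simp only: of_real_eq_iff)
      define c where "c = B / 2"
      define D where "D = (\<lambda>a b. Sm u n a b - (if a = b then complex_of_real c else 0))"
      have termeq: "D a b * cnj (D a b) = Sm u n a b * cnj (Sm u n a b)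
          - (if a = b then complex_of_real c * (Sm u n a a + cnj (Sm u n a a)) - complex_of_real (c*c) else 0)" for a b
        by (simp add: D_def algebra_simps)
      have "complex_of_real (\<Sum>a\<in>UNIV. \<Sum>b\<in>UNIV. (cmod (D a b))\<^sup>2)
          = (\<Sum>a\<in>UNIV. \<Sum>b\<in>UNIV. D a b * cnj (D a b))"
        by (simp only: of_real_sum complex_norm_square)
      also have "\<dots> = (\<Sum>a\<in>UNIV. \<Sum>b\<in>UNIV. Sm u n a b * cnj (Sm u n a b))
          - (\<Sum>a\<in>UNIV. complex_of_real c * (Sm u n a a + cnj (Sm u n a a)) - complex_of_real (c*c))"
        by (simp add: termeq sum_subtractf)
      also have "\<dots> = complex_of_real C1 - (2 * complex_of_real c * (\<Sum>a\<in>UNIV. Sm u n a a)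
           - (\<Sum>a\<in>(UNIV::('d+'d) set). complex_of_real (c*c)))"
        by (simp add: frob[symmetric] C1' Sm_real_diag sum_subtractf sum_distrib_left[symmetric])
      also have "\<dots> = complex_of_real C1 - (2 * complex_of_real c * complex_of_real T
           - 2 * of_nat (card (UNIV::'d set)) * complex_of_real (c*c))"
        by (simp add: trace_Sm T' card_UNIV_Plus)
      also have "\<dots> = 0"
      proof -
        have r: "2*C1 = B*B*real (card (UNIV::'d set))" using BT trT by simp
        have "complex_of_real (2*C1) = complex_of_real (B*B*real (card (UNIV::'d set)))"
          using r by simp
        then show ?thesis using trT unfolding c_def by (simp add: field_simps power2_eq_square)
      qed
      finally have fz: "(\<Sum>a\<in>UNIV. \<Sum>b\<in>UNIV. (cmod (D a b))\<^sup>2) = 0" by (simp only: of_real_eq_0_iff)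
      have Sdef: "Sm u n a b = (if a = b then complex_of_real c else 0)" for a b
      proof -
        have "(\<Sum>b\<in>UNIV. (cmod (D a b))\<^sup>2) = 0"
          using fz by (subst (asm) sum_nonneg_eq_0_iff) (auto intro: sum_nonneg)
        then have "(cmod (D a b))\<^sup>2 = 0"
          by (subst (asm) sum_nonneg_eq_0_iff) auto
        then show ?thesis by (simp add: D_def)
      qed
      have "c * cnorm2 y = (\<Sum>j<n. (cmod (cinner y (u j)))\<^sup>2)" for y
      proof -
        have "complex_of_real (\<Sum>j<n. (cmod (cinner y (u j)))\<^sup>2)
           = (\<Sum>a\<in>UNIV. \<Sum>b\<in>UNIV. Sm u n b a * y a * cnj (y b))" by (rule Q_expand)
        also have "\<dots> = (\<Sum>a\<in>UNIV. complex_of_real c * (y a * cnj (y a)))"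
        proof (rule sum.cong[OF refl])
          fix a :: "'d + 'd"
          have "Sm u n b a * y a * cnj (y b) = (if b = a then complex_of_real c * (y a * cnj (y a)) else 0)" for b
            by (simp add: Sdef)
          then show "(\<Sum>b\<in>UNIV. Sm u n b a * y a * cnj (y b)) = complex_of_real c * (y a * cnj (y a))"
            by simp
        qed
        also have "\<dots> = complex_of_real (c * cnorm2 y)"
          by (simp only: cnorm2_def of_real_mult of_real_sum complex_norm_square sum_distrib_left)
        finally show ?thesis by (simp only: of_real_eq_iff)
      qed
      then show "ctight u n" unfolding ctight_def c_def using B(1) by (intro exI[of _ "B/2"]) auto
    qed
    then show ?thesis by (simp add: C1_def C2_def)
  qed
  show ?thesis using P1 P2 unfolding u_def by blast
qed

end
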